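(* Let $k\in\hat I$, $u\in\mathbb C^\times$ and let $\lambda$ be a partition. In the Fock module $\mathcal F^{(k)}(u)$, for every $i\in\hat I$ the series $K_i^\pm(z)$ act on $|\lambda\rangle$ by the expansions in $z^{\mp1}$ of $$\prod_{(x,y)\in CV_i^{(k)}(\lambda)}\psi(q_3^xq_1^yq_2u/z)\prod_{(x,y)\in CC_i^{(k)}(\lambda)}\psi(q_3^xq_1^yq_2^2u/z)^{-1}.$$ In particular, $K_i|\lambda\rangle=q^{|CV_i^{(k)}(\lambda)|-|CC_i^{(k)}(\lambda)|}|\lambda\rangle$.
   Context: Fix $n\ge3$ and let $\hat I=\{0,\dots,n-1\}$, with indices mod $n$; $a\equiv b$ means $n\mid a-b$. Let $q,d\in\mathbb C^\times$ and $q_1=d/q$, $q_2=q^2$, $q_3=1/(dq)$, assumed generic: $q_1^aq_2^bq_3^c=1$ ($a,b,c\in\mathbb Z$) only if $a=b=c$. Let $\psi(z)=\frac{q-q^{-1}z}{1-z}$. The series $K_i^\pm(z)=K_i^{\pm1}\exp(\pm(q-q^{-1})\sum_{m\ge1}H_{i,\pm m}z^{\mp m})$ are Cartan generating series of the quantum toroidal algebra $\mathcal E_n$. Only their action on the Fock module matters here, so no further structure of $\mathcal E_n$ is needed. The Fock module $\mathcal F^{(k)}(u)$ has basis $|\lambda\rangle$ indexed by partitions. On it, $K_i^\pm(z)$ acts diagonally with eigenvalue on $|\lambda\rangle$ given by the expansion in $z^{\mp1}$ of $$\prod_{s\ge1,\ \lambda_s+i\equiv s+k}\psi(q_1^{\lambda_s-1}q_3^{s-1}u/z)\prod_{s\ge1,\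 \lambda_s+i+1\equiv s+k}\psi(q_1^{\lambda_s-1}q_3^{s-2}u/z)^{-1}.$$ The product is truncated at any $r$ with $\lambda_r=0$ and $i\equiv r+k$; the factors with $s\ge r$ multiply to $1$. Corners: let $\lambda'$ be the conjugate partition, $\lambda'_y=|\{x:\lambda_x\ge y\}|$. - A pair $(x,y)\in\mathbb Z_{\ge1}^2$ is a convex corner of $\lambda$ if $\lambda'_{y+1}<\lambda'_y=x$. - It is a concave corner if $\lambda'_y=x-1$ and either $y=1$ or $\lambda'_{y-1}>x-1$. Let $CV_i^{(k)}(\lambda)$ (resp. $CC_i^{(k)}(\lambda)$) be the set of convex (resp. concave) corners $(x,y)$ with $k+x-y\equiv i$; this is the set of corners of color $i$. *)

theory Defs
  imports Complex_Main "HOL-Computational_Algebra.Formal_Power_Series"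
begin

definition modeq :: "nat \<Rightarrow> int \<Rightarrow> int \<Rightarrow> bool" where
  "modeq n a b \<longleftrightarrow> int n dvd (a - b)"

definition is_partition :: "nat list \<Rightarrow> bool" where
  "is_partition lam \<longleftrightarrow> sorted_wrt (\<ge>) lam \<and> (\<forall>p\<in>set lam. p > 0)"

definition part :: "nat list \<Rightarrow> nat \<Rightarrow> nat" where
  "part lam s = (if 1 \<le> s \<and> s \<le> length lam then lam ! (s - 1) else 0)"

definition size_part :: "nat list \<Rightarrow> nat" where
  "size_part lam = sum_list lam"

definition conjp :: "nat list \<Rightarrow> nat \<Rightarrow> nat" where
  "conjp lam y = card {x. 1 \<le> x \<and> y \<le> part lam x}"

definition convex_corners :: "nat \<Rightarrow> nat \<Rightarrow> nat list \<Rightarrow> nat \<Rightarrow> (nat \<times> nat) set" where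
  "convex_corners n k lam i = {(x, y). 1 \<le> x \<and> 1 \<le> y \<and>
      conjp lam (y + 1) < conjp lam y \<and> conjp lam y = x \<and>
      modeq n (int k + int x - int y) (int i)}"

definition concave_corners :: "nat \<Rightarrow> nat \<Rightarrow> nat list \<Rightarrow> nat \<Rightarrow> (nat \<times> nat) set" where
  "concave_corners n k lam i = {(x, y). 1 \<le> x \<and> 1 \<le> y \<and>
      int (conjp lam y) = int x - 1 \<and> (y = 1 \<or> int (conjp lam (y - 1)) > int x - 1) \<and>
      modeq n (int k + int x - int y) (int i)}"

definition qq1 :: "complex \<Rightarrow> complex \<Rightarrow> complex" where "qq1 q d = d / q"
definition qq2 :: "complex \<Rightarrow> complex \<Rightarrow> complex" where "qq2 q d = q ^ 2"
definition qq3 :: "complex \<Rightarrow> complex \<Rightarrow> complex" where "qq3 q d = 1 / (d * q)"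

definition generic :: "complex \<Rightarrow> complex \<Rightarrow> bool" where
  "generic q d \<longleftrightarrow> (\<forall>a b c :: int.
     (qq1 q d) powi a * (qq2 q d) powi b * (qq3 q d) powi c = 1 \<longrightarrow> a = b \<and> b = c)"

text \<open>Expansion of psi(a/z), psi(w) = (q - q^{-1} w)/(1 - w).
  If pl = True: expansion in z^{-1}, written as a power series in the variable w = z^{-1}:
     psi(a w) = (q - (a/q) w) / (1 - a w).
  If pl = False: expansion in z, as a power series in z (for a \<noteq> 0):
     psi(a/z) = (q^{-1} - (q/a) z) / (1 - z/a).\<close>
definition psi_exp :: "bool \<Rightarrow> complex \<Rightarrow> complex \<Rightarrow> complex fps" where
  "psi_exp pl q a = (if pl
     then (fps_const q - fps_const (a / q) * fps_X) * inverse (1 - fps_const a * fps_X)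
     else (fps_const (1 / q) - fps_const (q / a) * fps_X) * inverse (1 - fps_const (1 / a) * fps_X))"

definition trunc_pt :: "nat \<Rightarrow> nat \<Rightarrow> nat list \<Rightarrow> nat \<Rightarrow> nat" where
  "trunc_pt n k lam i = (LEAST r. 1 \<le> r \<and> part lam r = 0 \<and> modeq n (int i) (int r + int k))"

text \<open>Eigenvalue of K_i^{+} (pl = True) resp. K_i^{-} (pl = False) on |lambda> in F^{(k)}(u),
  as defined for the Fock module (the product truncated at r = trunc_pt).\<close>
definition K_fock :: "bool \<Rightarrow> complex \<Rightarrow> complex \<Rightarrow> nat \<Rightarrow> nat \<Rightarrow> complex \<Rightarrow> nat list \<Rightarrow> nat \<Rightarrow> complex fps" where
  "K_fock pl q d n k u lam i =
     (let r = trunc_pt n k lam i in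
      (\<Prod>s\<in>{s. 1 \<le> s \<and> s < r \<and> modeq n (int (part lam s) + int i) (int s + int k)}.
          psi_exp pl q ((qq1 q d) powi (int (part lam s) - 1) * (qq3 q d) powi (int s - 1) * u))
      * (\<Prod>s\<in>{s. 1 \<le> s \<and> s < r \<and> modeq n (int (part lam s) + int i + 1) (int s + int k)}.
          inverse (psi_exp pl q ((qq1 q d) powi (int (part lam s) - 1) * (qq3 q d) powi (int s - 2) * u))))"

definition K_corner :: "bool \<Rightarrow> complex \<Rightarrow> complex \<Rightarrow> nat \<Rightarrow> nat \<Rightarrow> complex \<Rightarrow> nat list \<Rightarrow> nat \<Rightarrow> complex fps" where
  "K_corner pl q d n k u lam i =
      (\<Prod>(x, y)\<in>convex_corners n k lam i.
          psi_exp pl q ((qq3 q d) ^ x * (qq1 q d) ^ y * qq2 q d * u))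
      * (\<Prod>(x, y)\<in>concave_corners n k lam i.
          inverse (psi_exp pl q ((qq3 q d) ^ x * (qq1 q d) ^ y * (qq2 q d) ^ 2 * u)))"

text \<open>Eigenvalue of K_i on |lambda>: the constant term of the expansion of K_i^+(z).\<close>
definition K0_fock :: "complex \<Rightarrow> complex \<Rightarrow> nat \<Rightarrow> nat \<Rightarrow> complex \<Rightarrow> nat list \<Rightarrow> nat \<Rightarrow> complex" where
  "K0_fock q d n k u lam i = fps_nth (K_fock True q d n k u lam i) 0"

end

theory Submission
  imports Defs
begin

lemma part_antimono:
  assumes P: "is_partition lam" and "1 \<le> s" "s \<le> t"
  shows "part lam t \<le> part lam s"
proof (cases "s = t")
  case False
  show ?thesis
  proof (cases "t \<le> length lam")
    case True
    have "lam ! (s-1) \<ge> lam ! (t-1)"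
      using sorted_wrt_nth_less[of "(\<ge>)" lam "s-1" "t-1"] P True assms False
      unfolding is_partition_def by auto
    then show ?thesis using True assms unfolding part_def by auto
  next
    case False
    then show ?thesis unfolding part_def by auto
  qed
qed simp

lemma part_pos:
  assumes P: "is_partition lam"
  shows "0 < part lam s \<longleftrightarrow> 1 \<le> s \<and> s \<le> length lam"
proof -
  have "1 \<le> s \<Longrightarrow> s \<le> length lam \<Longrightarrow> lam ! (s-1) \<in> set lam" by auto
  then show ?thesis using P unfolding part_def is_partition_def by auto
qed

lemma conjp_iff:
  assumes P: "is_partition lam" and y: "1 \<le> y" and x: "1 \<le> x"
  shows "x \<le> conjp lam y \<longleftrightarrow> y \<le> part lam x"
proof -
  define S where "S = {x. 1 \<le> x \<and> y \<le> part lam x}"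
  have sub: "S \<subseteq> {1..length lam}"
  proof
    fix z assume "z \<in> S"
    then have "0 < part lam z" "1 \<le> z" using y unfolding S_def by auto
    then show "z \<in> {1..length lam}" using part_pos[OF P] by auto
  qed
  have fin: "finite S" using sub finite_subset by blast
  have dc: "\<And>a b. a \<in> S \<Longrightarrow> 1 \<le> b \<Longrightarrow> b \<le> a \<Longrightarrow> b \<in> S"
  proof -
    fix a b assume ab: "a \<in> S" "1 \<le> b" "b \<le> a"
    then have "part lam a \<le> part lam b" using part_antimono[OF P] by blast
    then show "b \<in> S" using ab unfolding S_def mem_Collect_eq by linarith
  qed
  define m where "m = (if S = {} then 0 else Max S)"
  have Seq: "S = {1..m}"
  proof
    show "S \<subseteq> {1..m}"
    proof
      fix z assume z: "z \<in> S"
      then have "z \<le> Max S" using fin by auto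
      then show "z \<in> {1..m}" using z unfolding m_def S_def by auto
    qed
    show "{1..m} \<subseteq> S"
    proof
      fix z assume z: "z \<in> {1..m}"
      then have ne: "S \<noteq> {}" unfolding m_def by (auto split: if_splits)
      then have "Max S \<in> S" using fin by auto
      then show "z \<in> S" using dc z ne unfolding m_def by auto
    qed
  qed
  have cm: "conjp lam y = m" unfolding conjp_def S_def[symmetric] Seq by simp
  have "x \<in> S \<longleftrightarrow> x \<in> {1..m}" unfolding Seq ..
  moreover have "x \<in> S \<longleftrightarrow> y \<le> part lam x" unfolding S_def using x by simp
  ultimately show ?thesis unfolding cm using x by simp
qed

lemma convex_mem:
  assumes P: "is_partition lam"
  shows "(x, y) \<in> convex_corners n k lam i \<longleftrightarrow>
    (1 \<le> x \<and> y = part lam x \<and> 1 \<le> part lam x \<and> part lam (x+1) < part lam x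
     \<and> modeq n (int k + int x - int y) (int i))"
proof (cases "1 \<le> x \<and> 1 \<le> y")
  case True
  then show ?thesis
    using conjp_iff[OF P, of y x] conjp_iff[OF P, of y "x+1"] conjp_iff[OF P, of "y+1" x]
    unfolding convex_corners_def by auto
next
  case False
  then show ?thesis unfolding convex_corners_def by auto
qed

lemma concave_mem:
  assumes P: "is_partition lam"
  shows "(x, y) \<in> concave_corners n k lam i \<longleftrightarrow>
    (1 \<le> x \<and> y = part lam x + 1 \<and> (x = 1 \<or> part lam x < part lam (x-1))
     \<and> modeq n (int k + int x - int y) (int i))"
proof (cases "1 \<le> x \<and> 1 \<le> y")
  case True
  have e1: "int (conjp lam y) = int x - 1 \<longleftrightarrow> conjp lam y = x - 1" using True by auto
  have e2: "(int (conjp lam (y - 1)) > int x - 1 \<longleftrightarrow> y - 1 \<le> part lam x)" if yy: "y \<noteq> 1"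
  proof -
    have y1: "1 \<le> y - 1" using True yy by auto
    have "x \<le> conjp lam (y-1) \<longleftrightarrow> y - 1 \<le> part lam x" using conjp_iff[OF P y1, of x] True by auto
    then show ?thesis by linarith
  qed
  have e3: "conjp lam y = x - 1 \<longleftrightarrow> (\<not> y \<le> part lam x) \<and> (x = 1 \<or> y \<le> part lam (x-1))"
  proof (cases "x = 1")
    case True
    then show ?thesis using conjp_iff[OF P, of y 1] \<open>1 \<le> x \<and> 1 \<le> y\<close> by auto
  next
    case False
    then have x1: "1 \<le> x - 1" using True by auto
    then show ?thesis using conjp_iff[OF P, of y x] conjp_iff[OF P, of y "x-1"] True False by auto
  qed
  have L: "(x,y) \<in> concave_corners n k lam i \<longleftrightarrow> (conjp lam y = x - 1 \<and>
     (y = 1 \<or> int (conjp lam (y - 1)) > int x - 1) \<and> modeq n (int k + int x - int y) (int i))"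
    unfolding concave_corners_def using True e1 by simp
  have R: "(conjp lam y = x - 1 \<and> (y = 1 \<or> int (conjp lam (y - 1)) > int x - 1))
     \<longleftrightarrow> (y = part lam x + 1 \<and> (x = 1 \<or> part lam x < part lam (x-1)))"
  proof (cases "y = 1")
    case True
    then show ?thesis using e3 by auto
  next
    case False
    have a: "(y = 1 \<or> int (conjp lam (y - 1)) > int x - 1) \<longleftrightarrow> y - 1 \<le> part lam x"
      using e2[OF False] False by simp
    show ?thesis unfolding a e3 using False True by linarith
  qed
  show ?thesis using L R True by blast
next
  case False
  then show ?thesis unfolding concave_corners_def by auto
qed


lemma psi0: "fps_nth (psi_exp pl q a) 0 = (if pl then q else 1 / q)"
  unfolding psi_exp_def by simp

lemma fps_prod_nth0: "fps_nth (prod f A) 0 = (\<Prod>x\<in>A. fps_nth (f x) 0)"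
  for f :: "'b \<Rightarrow> complex fps"
  by (induct A rule: infinite_finite_induct) simp_all

lemma gen_cv:
  fixes a b c u :: complex
  assumes "a \<noteq> 0" "b \<noteq> 0" "a * b * c = 1"
  shows "b ^ x * a ^ y * c * u = a powi (int y - 1) * b powi (int x - 1) * u"
proof -
  have 1: "a powi (int y - 1) = a ^ y / a" using assms by (simp add: power_int_diff)
  have 2: "b powi (int x - 1) = b ^ x / b" using assms by (simp add: power_int_diff)
  have 3: "c = 1 / (a * b)" using assms by (simp add: field_simps)
  show ?thesis unfolding 1 2 3 using assms by (simp add: field_simps)
qed
lemma gen_cc:
  fixes a b c u :: complex
  assumes "a \<noteq> 0" "b \<noteq> 0" "a * b * c = 1"
  shows "b ^ x * a ^ (y + 1) * c ^ 2 * u = a powi (int y - 1) * b powi (int x - 2) * u"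
proof -
  have 1: "a powi (int y - 1) = a ^ y / a" using assms by (simp add: power_int_diff)
  have 2: "b powi (int x - 2) = b ^ x / b ^ 2" using assms by (simp add: power_int_diff)
  have 3: "c = 1 / (a * b)" using assms by (simp add: field_simps)
  show ?thesis unfolding 1 2 3 using assms by (simp add: field_simps power2_eq_square)
qed
lemma q123: "q \<noteq> 0 \<Longrightarrow> d \<noteq> 0 \<Longrightarrow> qq1 q d * qq3 q d * qq2 q d = 1"
  unfolding qq1_def qq2_def qq3_def by (simp add: field_simps power2_eq_square)
lemma q1nz: "q \<noteq> 0 \<Longrightarrow> d \<noteq> 0 \<Longrightarrow> qq1 q d \<noteq> 0" unfolding qq1_def by simp
lemma q3nz: "q \<noteq> 0 \<Longrightarrow> d \<noteq> 0 \<Longrightarrow> qq3 q d \<noteq> 0" unfolding qq3_def by simp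

lemma modeq_shift: "modeq n (int a + int i + 1) (int (Suc t) + int k) \<longleftrightarrow> modeq n (int a + int i) (int t + int k)"
  unfolding modeq_def by (simp add: algebra_simps)

lemma modeq_conv: "modeq n (int a + int i) (int s + int k) \<longleftrightarrow> modeq n (int k + int s - int a) (int i)"
proof -
  have "int a + int i - (int s + int k) = - (int k + int s - int a - int i)" by simp
  then show ?thesis unfolding modeq_def by (metis dvd_minus_iff)
qed

lemma modeq_conv2: "modeq n (int a + int i + 1) (int s + int k) \<longleftrightarrow> modeq n (int k + int s - int (a + 1)) (int i)"
proof -
  have "int a + int i + 1 - (int s + int k) = - (int k + int s - int (a + 1) - int i)" by simp
  then show ?thesis unfolding modeq_def by (metis dvd_minus_iff)
qed


theorem mainTheorem4:
  fixes q d u :: complex and n k i :: nat and lam :: "nat list"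
  assumes "n \<ge> 3" and "q \<noteq> 0" and "d \<noteq> 0" and "generic q d"
    and "k < n" and "u \<noteq> 0" and "is_partition lam" and "i < n"
  shows "(\<forall>pl. K_fock pl q d n k u lam i = K_corner pl q d n k u lam i)
    \<and> K0_fock q d n k u lam i
        = q powi (int (card (convex_corners n k lam i)) - int (card (concave_corners n k lam i)))"
proof -
  note P = \<open>is_partition lam\<close>
  define L where "L = length lam"
  define r where "r = trunc_pt n k lam i"
  define Q where "Q = (\<lambda>r. 1 \<le> r \<and> part lam r = 0 \<and> modeq n (int i) (int r + int k))"
  have ex: "\<exists>r. Q r"
  proof -
    define a where "a = int i - int k - int (L + 1)"
    define w where "w = L + 1 + nat (a mod int n)"
    have n0: "int n > 0" using \<open>n \<ge> 3\<close> by simp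
    have wi: "int w = int (L + 1) + a mod int n" unfolding w_def using n0 by simp
    have "int i - (int w + int k) = a - a mod int n" unfolding wi a_def by simp
    also have "\<dots> = int n * (a div int n)" by (simp add: minus_mod_eq_mult_div)
    finally have "modeq n (int i) (int w + int k)" unfolding modeq_def by simp
    moreover have "part lam w = 0" unfolding part_def w_def L_def by simp
    ultimately have "Q w" unfolding Q_def w_def by simp
    then show ?thesis by blast
  qed
  have rdef: "r = (LEAST r. Q r)" unfolding r_def trunc_pt_def Q_def by simp
  have Qr: "Q r" unfolding rdef using ex by (rule LeastI_ex)
  have rmin: "\<And>s. Q s \<Longrightarrow> r \<le> s" unfolding rdef by (rule Least_le)
  have r1: "1 \<le> r" and pr: "part lam r = 0" and mr: "modeq n (int i) (int r + int k)"
    using Qr unfolding Q_def by auto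
  have rL: "L < r" using part_pos[OF P, of r] r1 pr unfolding L_def by auto

  have sub_r: "\<And>s. 1 \<le> s \<Longrightarrow> 0 < part lam s \<Longrightarrow> s < r"
    using part_pos[OF P] rL unfolding L_def by fastforce
  define Sp where "Sp = {s. 1 \<le> s \<and> s < r \<and> modeq n (int (part lam s) + int i) (int s + int k)}"
  define Sm where "Sm = {s. 1 \<le> s \<and> s < r \<and> modeq n (int (part lam s) + int i + 1) (int s + int k)}"
  define CVr where "CVr = {x. 1 \<le> x \<and> 1 \<le> part lam x \<and> part lam (x+1) < part lam x \<and> modeq n (int k + int x - int (part lam x)) (int i)}"
  define CCr where "CCr = {x. 1 \<le> x \<and> (x = 1 \<or> part lam x < part lam (x-1)) \<and> modeq n (int k + int x - int (part lam x + 1)) (int i)}"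
  define Ep where "Ep = {s \<in> Sp. part lam (s+1) = part lam s}"
  define Em where "Em = {s \<in> Sm. 2 \<le> s \<and> part lam (s-1) = part lam s}"
  have CVeq: "convex_corners n k lam i = (\<lambda>x. (x, part lam x)) ` CVr"
  proof (rule set_eqI)
    fix z :: "nat \<times> nat"
    obtain x y where z: "z = (x, y)" by (cases z)
    show "z \<in> convex_corners n k lam i \<longleftrightarrow> z \<in> (\<lambda>x. (x, part lam x)) ` CVr"
      unfolding z convex_mem[OF P] CVr_def by auto
  qed
  have CCeq: "concave_corners n k lam i = (\<lambda>x. (x, part lam x + 1)) ` CCr"
  proof (rule set_eqI)
    fix z :: "nat \<times> nat"
    obtain x y where z: "z = (x, y)" by (cases z)
    show "z \<in> concave_corners n k lam i \<longleftrightarrow> z \<in> (\<lambda>x. (x, part lam x + 1)) ` CCr"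
      unfolding z concave_mem[OF P] CCr_def by auto
  qed
  have Sp_pos: "1 \<le> part lam s" if "s \<in> Sp" for s
  proof (rule ccontr)
    assume "\<not> 1 \<le> part lam s"
    then have "part lam s = 0" by simp
    then have "Q s" using that unfolding Sp_def Q_def by simp
    then have "r \<le> s" by (rule rmin)
    then show False using that unfolding Sp_def by simp
  qed
  have Sp_split: "Sp = CVr \<union> Ep"
  proof (rule set_eqI)
    fix s
    show "s \<in> Sp \<longleftrightarrow> s \<in> CVr \<union> Ep"
    proof
      assume s: "s \<in> Sp"
      then have s1: "1 \<le> s" unfolding Sp_def by simp
      have "part lam (s+1) \<le> part lam s" using part_antimono[OF P s1, of "s+1"] by simp
      then show "s \<in> CVr \<union> Ep" using s Sp_pos[OF s] modeq_conv[of n "part lam s" i s k]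
        unfolding Sp_def CVr_def Ep_def by auto
    next
      assume s: "s \<in> CVr \<union> Ep"
      show "s \<in> Sp"
      proof (cases "s \<in> Ep")
        case True then show ?thesis unfolding Ep_def by simp
      next
        case False
        then have "s \<in> CVr" using s by simp
        then show ?thesis using sub_r[of s] modeq_conv[of n "part lam s" i s k]
          unfolding Sp_def CVr_def by auto
      qed
    qed
  qed
  have Sp_disj: "CVr \<inter> Ep = {}" unfolding CVr_def Ep_def by auto
  have CC_lt: "s < r" if s: "s \<in> CCr" for s
  proof -
    have s1: "1 \<le> s" using s unfolding CCr_def by simp
    have "s \<le> L + 1"
    proof (cases "0 < part lam s")
      case True then show ?thesis using part_pos[OF P, of s] unfolding L_def by simp
    next
      case False
      then have "s = 1 \<or> 0 < part lam (s - 1)" using s unfolding CCr_def by auto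
      then show ?thesis using part_pos[OF P, of "s-1"] unfolding L_def by auto
    qed
    then have "s \<le> r" using rL by simp
    moreover have "s \<noteq> r"
    proof
      assume "s = r"
      then have "modeq n (int (part lam r) + int i + 1) (int r + int k)"
        using s modeq_conv2[of n "part lam r" i r k] unfolding CCr_def by simp
      then have a: "int n dvd (int i + 1 - (int r + int k))" using pr unfolding modeq_def by simp
      have b: "int n dvd (int i - (int r + int k))" using mr unfolding modeq_def by simp
      have "int n dvd ((int i + 1 - (int r + int k)) - (int i - (int r + int k)))"
        using a b by (rule dvd_diff)
      then have "int n dvd 1" by simp
      then have "int n \<le> 1" by (simp add: zdvd_imp_le)
      then show False using \<open>n \<ge> 3\<close> by simp
    qed
    ultimately show ?thesis by simp
  qed
  have Sm_split: "Sm = CCr \<union> Em"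
  proof (rule set_eqI)
    fix s
    show "s \<in> Sm \<longleftrightarrow> s \<in> CCr \<union> Em"
    proof
      assume s: "s \<in> Sm"
      then have s1: "1 \<le> s" unfolding Sm_def by simp
      have m: "modeq n (int k + int s - int (part lam s + 1)) (int i)"
        using s modeq_conv2[of n "part lam s" i s k] unfolding Sm_def by simp
      show "s \<in> CCr \<union> Em"
      proof (cases "s = 1")
        case True then show ?thesis using m unfolding CCr_def by simp
      next
        case False
        then have s2: "1 \<le> s - 1" using s1 by simp
        have "part lam s \<le> part lam (s-1)" using part_antimono[OF P s2, of s] by simp
        then show ?thesis using m s False s1 unfolding CCr_def Em_def by auto
      qed
    next
      assume s: "s \<in> CCr \<union> Em"
      show "s \<in> Sm"
      proof (cases "s \<in> Em")
        case True then show ?thesis unfolding Em_def by simp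
      next
        case False
        then have "s \<in> CCr" using s by simp
        then show ?thesis using CC_lt[of s] modeq_conv2[of n "part lam s" i s k]
          unfolding Sm_def CCr_def by auto
      qed
    qed
  qed
  have Sm_disj: "CCr \<inter> Em = {}" unfolding CCr_def Em_def by auto
  have Em_eq: "Em = Suc ` Ep"
  proof (rule set_eqI)
    fix s
    show "s \<in> Em \<longleftrightarrow> s \<in> Suc ` Ep"
    proof
      assume s: "s \<in> Em"
      then have s2: "2 \<le> s" and eq: "part lam (s-1) = part lam s" unfolding Em_def by auto
      have sS: "s = Suc (s - 1)" using s2 by simp
      have "modeq n (int (part lam s) + int i + 1) (int (Suc (s-1)) + int k)"
        using s sS unfolding Em_def Sm_def by simp
      then have "modeq n (int (part lam (s-1)) + int i) (int (s-1) + int k)"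
        unfolding modeq_shift eq .
      then have "s - 1 \<in> Ep" using s s2 eq sS unfolding Em_def Sm_def Ep_def Sp_def by auto
      then show "s \<in> Suc ` Ep" using sS by blast
    next
      assume "s \<in> Suc ` Ep"
      then obtain t where t: "t \<in> Ep" and st: "s = Suc t" by blast
      have tp: "t \<in> Sp" and eq: "part lam (Suc t) = part lam t" using t unfolding Ep_def by auto
      have t1: "1 \<le> t" using tp unfolding Sp_def by simp
      have "1 \<le> part lam (Suc t)" using Sp_pos[OF tp] eq by simp
      then have lt: "Suc t < r" using sub_r[of "Suc t"] by simp
      have "modeq n (int (part lam t) + int i) (int t + int k)" using tp unfolding Sp_def by simp
      then have "modeq n (int (part lam (Suc t)) + int i + 1) (int (Suc t) + int k)"
        unfolding modeq_shift eq .
      then show "s \<in> Em" using st lt t1 eq unfolding Em_def Sm_def by simp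
    qed
  qed
  have finSp: "finite Sp" unfolding Sp_def by (rule finite_subset[of _ "{..<r}"]) auto
  have finSm: "finite Sm" unfolding Sm_def by (rule finite_subset[of _ "{..<r}"]) auto
  have finCV: "finite CVr" and finEp: "finite Ep" using finSp Sp_split by auto
  have finCC: "finite CCr" and finEm: "finite Em" using finSm Sm_split by auto
  have q123': "qq1 q d * qq3 q d * qq2 q d = 1" using q123 \<open>q \<noteq> 0\<close> \<open>d \<noteq> 0\<close> by blast
  have q1: "qq1 q d \<noteq> 0" and q3: "qq3 q d \<noteq> 0" using \<open>q \<noteq> 0\<close> \<open>d \<noteq> 0\<close> q1nz q3nz by auto
  have main: "K_fock pl q d n k u lam i = K_corner pl q d n k u lam i" for pl
  proof -
    define f where "f = (\<lambda>s. psi_exp pl q (qq1 q d powi (int (part lam s) - 1) * qq3 q d powi (int s - 1) * u))"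
    define G where "G = (\<lambda>s. inverse (psi_exp pl q (qq1 q d powi (int (part lam s) - 1) * qq3 q d powi (int s - 2) * u)))"
    have Kf: "K_fock pl q d n k u lam i = prod f Sp * prod G Sm"
      unfolding K_fock_def Let_def f_def G_def Sp_def Sm_def r_def by (rule refl)
    have 1: "prod f Sp = prod f CVr * prod f Ep"
      unfolding Sp_split using finCV finEp Sp_disj by (rule prod.union_disjoint)
    have 2: "prod G Sm = prod G CCr * prod G Em"
      unfolding Sm_split using finCC finEm Sm_disj by (rule prod.union_disjoint)
    have 3: "prod G Em = prod (\<lambda>t. inverse (f t)) Ep"
    proof -
      have "prod G Em = prod (G \<circ> Suc) Ep" unfolding Em_eq by (rule prod.reindex) simp
      also have "\<dots> = prod (\<lambda>t. inverse (f t)) Ep"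
      proof (rule prod.cong)
        fix t assume "t \<in> Ep"
        then have eq: "part lam (Suc t) = part lam t" unfolding Ep_def by simp
        have "int (Suc t) - 2 = int t - 1" by simp
        then show "(G \<circ> Suc) t = inverse (f t)" unfolding G_def f_def o_def eq by simp
      qed simp
      finally show ?thesis .
    qed
    have 4: "prod f Ep * prod (\<lambda>t. inverse (f t)) Ep = 1"
    proof -
      have "prod f Ep * prod (\<lambda>t. inverse (f t)) Ep = prod (\<lambda>t. f t * inverse (f t)) Ep"
        by (rule prod.distrib[symmetric])
      also have "\<dots> = prod (\<lambda>t. 1) Ep"
      proof (rule prod.cong)
        fix t
        have "fps_nth (f t) 0 \<noteq> 0" unfolding f_def psi0 using \<open>q \<noteq> 0\<close> by simp
        then show "f t * inverse (f t) = 1" by (rule inverse_mult_eq_1')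
      qed simp
      finally show ?thesis by simp
    qed
    have 5: "K_fock pl q d n k u lam i = prod f CVr * prod G CCr"
      unfolding Kf 1 2 3 using 4 by (simp add: algebra_simps)
    have 6: "(\<Prod>(x, y)\<in>convex_corners n k lam i.
          psi_exp pl q ((qq3 q d) ^ x * (qq1 q d) ^ y * qq2 q d * u)) = prod f CVr"
    proof -
      have inj: "inj_on (\<lambda>x. (x, part lam x)) CVr" by (rule inj_onI) simp
      show ?thesis unfolding CVeq prod.reindex[OF inj] o_def f_def
        by (rule prod.cong[OF refl]) (simp only: case_prod_conv gen_cv[OF q1 q3 q123'])
    qed
    have 7: "(\<Prod>(x, y)\<in>concave_corners n k lam i.
          inverse (psi_exp pl q ((qq3 q d) ^ x * (qq1 q d) ^ y * (qq2 q d) ^ 2 * u))) = prod G CCr"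
    proof -
      have inj: "inj_on (\<lambda>x. (x, part lam x + 1)) CCr" by (rule inj_onI) simp
      show ?thesis unfolding CCeq prod.reindex[OF inj] o_def G_def
        by (rule prod.cong[OF refl]) (simp only: case_prod_conv gen_cc[OF q1 q3 q123'])
    qed
    show ?thesis unfolding 5 K_corner_def 6 7 ..
  qed
  have K0: "K0_fock q d n k u lam i
      = q ^ card (convex_corners n k lam i) * (inverse q) ^ card (concave_corners n k lam i)"
    unfolding K0_fock_def main K_corner_def
    by (simp add: fps_prod_nth0 case_prod_beta psi0)
  have "q powi (int (card (convex_corners n k lam i)) - int (card (concave_corners n k lam i)))
      = q ^ card (convex_corners n k lam i) * (inverse q) ^ card (concave_corners n k lam i)"
    using \<open>q \<noteq> 0\<close> by (simp add: power_int_diff divide_inverse power_inverse)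
  then show ?thesis using main K0 by simp
qed

end
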